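(* For every $\sigma\in\mathrm{Aut}(M_7)$, the action of $\sigma$ commutes with the action of $\Lambda_{\{2\},\{3\}}$, i.e. $\Lambda_{\{2\},\{3\}}\circ\sigma=\sigma\circ\Lambda_{\{2\},\{3\}}$ (in particular $\lambda_{\{2\},\{3\}}\circ\sigma=\sigma\circ\lambda_{\{2\},\{3\}}$ as rational self-maps of $\mathcal{R}_7$).
   Context: Over $\mathbb{C}$. For a line arrangement $\mathcal{C}$, $\Lambda_{\{2\},\{3\}}(\mathcal{C})$ is the union of lines containing exactly three double points of $\mathcal{C}$. For a labeled arrangement $\mathcal{C}_0=(\ell_1,\dots,\ell_7)$ let $H_j=\sum_{k\neq j}\ell_k$; the labeled image is $\Lambda_{\{2\},\{3\}}(\mathcal{C}_0)=(\Lambda_{\{2\},\{3\}}(H_1),\dots,\Lambda_{\{2\},\{3\}}(H_7))$. $M_7$ is the rank-3 matroid on $\{1,\dots,7,1',\dots,7'\}$ whose non-bases are the triples $\{a,b,c'\}$ with $a\neq b\in\{1,\dots,7\}$, $a+b\equiv2c\pmod7$; its realizations are labeled 14-line arrangements in which three lines are concurrent iff their labels form a non-basis, and for a realization $\mathcal{C}_0\cup\mathcal{C}_1$ one has $\mathcal{C}_1=\Lambda_{\{2\},\{3\}}(\mathcal{C}_0)$ (labeled). $\mathcal{R}_7$ is the moduli space of realizations up to $\mathrm{PGL}_3$; for generic realizations $\mathcal{C}_1\cup\Lambda_{\{2\},\{3\}}(\mathcal{C}_1)$ is again a realization, and $\lambda_{\{2\},\{3\}}:[\mathcal{C}_0\cup\mathcal{C}_1]\mapsto[\mathcal{C}_1\cup\Lambda_{\{2\},\{3\}}(\mathcal{C}_1)]$.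 $\mathrm{Aut}(M_7)$ is the group of permutations of the ground set preserving bases; each $\sigma$ preserves $\{1,\dots,7\}$ and acts on labeled arrangements (and on $\mathcal{R}_7$) by permuting labels. *)

theory Defs
  imports "HOL-Analysis.Analysis"
begin

type_synonym vec3 = "complex ^ 3"

definition proj_point :: "vec3 \<Rightarrow> vec3 set" where
  "proj_point v = {c *s v | c. c \<noteq> 0}"

definition P2 :: "vec3 set set" where
  "P2 = proj_point ` (UNIV - {0})"

definition line_of :: "vec3 \<Rightarrow> vec3 set set" where
  "line_of l = {P \<in> P2. \<forall>v\<in>P. (\<Sum>i\<in>UNIV. l $ i * v $ i) = 0}"

definition proj_lines :: "vec3 set set set" where
  "proj_lines = line_of ` (UNIV - {0})"

definition double_points :: "vec3 set set set \<Rightarrow> vec3 set set" where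
  "double_points A = {P \<in> P2. card {L \<in> A. P \<in> L} = 2}"

definition Lambda23 :: "vec3 set set set \<Rightarrow> vec3 set set" where
  "Lambda23 A = \<Union> {L \<in> proj_lines. card (L \<inter> double_points A) = 3}"

definition labeled_arrangement7 :: "(nat \<Rightarrow> vec3 set set) \<Rightarrow> bool" where
  "labeled_arrangement7 C \<longleftrightarrow> (\<forall>i\<in>{1..7}. C i \<in> proj_lines) \<and> inj_on C {1..7}"

definition H_arr :: "(nat \<Rightarrow> vec3 set set) \<Rightarrow> nat \<Rightarrow> vec3 set set set" where
  "H_arr C j = C ` ({1..7} - {j})"

definition Lambda23_lab :: "(nat \<Rightarrow> vec3 set set) \<Rightarrow> nat \<Rightarrow> vec3 set set" where
  "Lambda23_lab C j = Lambda23 (H_arr C j)"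

text \<open>Ground set: (i, False) stands for label i, (i, True) for label i', i in {1..7}.\<close>
definition M7_ground :: "(nat \<times> bool) set" where
  "M7_ground = {1..7} \<times> UNIV"

definition M7_nonbasis :: "(nat \<times> bool) set \<Rightarrow> bool" where
  "M7_nonbasis T \<longleftrightarrow> (\<exists>a b c. a \<in> {1..7} \<and> b \<in> {1..7} \<and> c \<in> {1..7} \<and> a \<noteq> b \<and>
      (a + b) mod 7 = (2 * c) mod 7 \<and> T = {(a, False), (b, False), (c, True)})"

definition M7_bases :: "(nat \<times> bool) set set" where
  "M7_bases = {T. T \<subseteq> M7_ground \<and> card T = 3 \<and> \<not> M7_nonbasis T}"

definition Aut_M7 :: "((nat \<times> bool) \<Rightarrow> (nat \<times> bool)) set" where
  "Aut_M7 = {\<sigma>. bij_betw \<sigma> M7_ground M7_ground \<and>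
      (\<forall>T. T \<subseteq> M7_ground \<longrightarrow> (T \<in> M7_bases \<longleftrightarrow> \<sigma> ` T \<in> M7_bases))}"

text \<open>Action of sigma on a 7-tuple labeled by the unprimed labels (b = False) or by the
primed labels (b = True), by relabeling: the object with label x gets label sigma(x),
i.e. (sigma . D)(y) = D(sigma^{-1}(y)).  (Every automorphism preserves {1..7}.)\<close>
definition act_lab :: "((nat \<times> bool) \<Rightarrow> (nat \<times> bool)) \<Rightarrow> bool \<Rightarrow> (nat \<Rightarrow> 'a) \<Rightarrow> nat \<Rightarrow> 'a" where
  "act_lab \<sigma> b D i = D (fst (inv_into M7_ground \<sigma> (i, b)))"

end

theory Submission
  imports Defs
begin

definition adj7 :: "nat \<times> bool \<Rightarrow> nat \<times> bool \<Rightarrow> bool" where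
  "adj7 x y \<longleftrightarrow> (\<exists>T. M7_nonbasis T \<and> x \<in> T \<and> y \<in> T \<and> x \<noteq> y)"

lemma range7: "(a::nat) \<in> {1..7} \<longleftrightarrow> a = 1 \<or> a = 2 \<or> a = 3 \<or> a = 4 \<or> a = 5 \<or> a = 6 \<or> a = 7"
  by auto

lemma wit_UU: "a \<in> {1..7} \<Longrightarrow> b \<in> {1..7} \<Longrightarrow> \<exists>c\<in>{1..7::nat}. (a + b) mod 7 = (2 * c) mod 7"
  unfolding range7 by (elim disjE; simp; presburger)

lemma wit_UP: "a \<in> {1..7} \<Longrightarrow> c \<in> {1..7} \<Longrightarrow> a \<noteq> c \<Longrightarrow> \<exists>b\<in>{1..7::nat}. b \<noteq> a \<and> (a + b) mod 7 = (2 * c) mod 7"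
  unfolding range7 by (elim disjE; simp; presburger)

lemma adj_UU: "a \<in> {1..7} \<Longrightarrow> b \<in> {1..7} \<Longrightarrow> a \<noteq> b \<Longrightarrow> adj7 (a, False) (b, False)"
  unfolding adj7_def M7_nonbasis_def
  using wit_UU[of a b] by blast

lemma adj_UP: "a \<in> {1..7} \<Longrightarrow> c \<in> {1..7} \<Longrightarrow> a \<noteq> c \<Longrightarrow> adj7 (a, False) (c, True)"
  unfolding adj7_def M7_nonbasis_def
  using wit_UP[of a c] by blast

lemma adj_sym: "adj7 x y \<Longrightarrow> adj7 y x"
  unfolding adj7_def by blast

lemma nadj_PP: "\<not> adj7 (a, True) (b, True)"
  unfolding adj7_def M7_nonbasis_def by auto

lemma nadj_cc: "c \<in> {1..7} \<Longrightarrow> \<not> adj7 (c, False) (c, True)"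
proof
  assume c: "c \<in> {1..7}" and "adj7 (c, False) (c, True)"
  then obtain a b where ab: "a \<in> {1..7}" "b \<in> {1..7}" "a \<noteq> b" "(a + b) mod 7 = (2 * c) mod 7"
    "(c, False) \<in> {(a, False), (b, False), (c, True)}"
    unfolding adj7_def M7_nonbasis_def by auto
  then have "a = c \<or> b = c" by auto
  then show False using ab c unfolding range7 by auto
qed

lemma nonbasis_sub: "M7_nonbasis T \<Longrightarrow> T \<subseteq> M7_ground \<and> card T = 3"
  unfolding M7_nonbasis_def M7_ground_def by auto

lemma adj_back:
  assumes s: "\<sigma> \<in> Aut_M7" and x: "x \<in> M7_ground" and y: "y \<in> M7_ground"
    and a: "adj7 (\<sigma> x) (\<sigma> y)"
  shows "adj7 x y"
proof -
  have bij: "bij_betw \<sigma> M7_ground M7_ground" and pres: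
    "\<And>T. T \<subseteq> M7_ground \<Longrightarrow> (T \<in> M7_bases \<longleftrightarrow> \<sigma> ` T \<in> M7_bases)"
    using s unfolding Aut_M7_def by auto
  obtain T' where T': "M7_nonbasis T'" "\<sigma> x \<in> T'" "\<sigma> y \<in> T'" "\<sigma> x \<noteq> \<sigma> y"
    using a unfolding adj7_def by blast
  have T'g: "T' \<subseteq> M7_ground" "card T' = 3" using nonbasis_sub[OF T'(1)] by auto
  define T where "T = inv_into M7_ground \<sigma> ` T'"
  have TG: "T \<subseteq> M7_ground" unfolding T_def using T'g bij
    by (metis bij_betw_def image_mono inv_into_into order_trans subsetI image_subsetI)
  have im: "\<sigma> ` T = T'" unfolding T_def using T'g bij
    by (simp add: bij_betw_def image_inv_into_cancel)
  have inj: "inj_on \<sigma> M7_ground" using bij bij_betw_def by blast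
  have cT: "card T = 3" using T'g im card_image inj_on_subset[OF inj TG] by metis
  have "M7_nonbasis T"
  proof (rule ccontr)
    assume "\<not> M7_nonbasis T"
    then have "T \<in> M7_bases" using TG cT unfolding M7_bases_def by auto
    then have "T' \<in> M7_bases" using pres[OF TG] im by simp
    then show False using T'(1) unfolding M7_bases_def by auto
  qed
  moreover have "x \<in> T" unfolding T_def using T'(2) x inj
    by (metis image_eqI inv_into_f_f)
  moreover have "y \<in> T" unfolding T_def using T'(3) y inj
    by (metis image_eqI inv_into_f_f)
  moreover have "x \<noteq> y" using T'(4) by auto
  ultimately show ?thesis unfolding adj7_def by blast
qed

lemma prim_pres:
  assumes s: "\<sigma> \<in> Aut_M7" and x: "x \<in> M7_ground" and p: "snd x"
  shows "snd (\<sigma> x)"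
proof (rule ccontr)
  have bij: "bij_betw \<sigma> M7_ground M7_ground" using s unfolding Aut_M7_def by auto
  have inj: "inj_on \<sigma> M7_ground" using bij bij_betw_def by blast
  assume n: "\<not> snd (\<sigma> x)"
  have sxG: "\<sigma> x \<in> M7_ground" using bij x bij_betwE by blast
  obtain c where c: "\<sigma> x = (c, False)" "c \<in> {1..7}" using n sxG unfolding M7_ground_def
    by (cases "\<sigma> x") auto
  define r where "r = inv_into M7_ground \<sigma> (c, True)"
  have "((1::nat),True) \<noteq> x \<and> (1,True) \<noteq> r \<or> ((2::nat),True) \<noteq> x \<and> (2,True) \<noteq> r \<or> ((3::nat),True) \<noteq> x \<and> (3,True) \<noteq> r"
    by auto
  then obtain y where y: "y \<in> {(1,True),(2,True),(3::nat,True)}" "y \<noteq> x" "y \<noteq> r" by blast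
  have yG: "y \<in> M7_ground" using y(1) unfolding M7_ground_def by auto
  have "(c, True) \<in> M7_ground" using c unfolding M7_ground_def by auto
  then have sr: "\<sigma> r = (c, True)" "r \<in> M7_ground" unfolding r_def using bij
    by (auto simp add: bij_betw_def f_inv_into_f inv_into_into)
  have d1: "\<sigma> y \<noteq> (c, True)" using sr y(3) inj yG by (metis inj_on_def)
  have d2: "\<sigma> y \<noteq> \<sigma> x" using y(2) inj yG x by (metis inj_on_def)
  have syG: "\<sigma> y \<in> M7_ground" using bij yG bij_betwE by blast
  obtain k b where kb: "\<sigma> y = (k, b)" "k \<in> {1..7}" using syG unfolding M7_ground_def by auto
  have "adj7 (\<sigma> x) (\<sigma> y)"
  proof (cases b)
    case True
    then show ?thesis using kb d1 c adj_UP by simp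
  next
    case False
    then show ?thesis using kb d2 c adj_UU by auto
  qed
  then have "adj7 x y" using adj_back[OF s x yG] by simp
  moreover obtain a where "x = (a, True)" using p by (cases x) auto
  moreover have "\<exists>b. y = (b, True)" using y(1) by auto
  ultimately show False using nadj_PP by auto
qed

lemma unprim_pres:
  assumes s: "\<sigma> \<in> Aut_M7" and x: "x \<in> M7_ground" and p: "\<not> snd x"
  shows "\<not> snd (\<sigma> x)"
proof
  assume sp: "snd (\<sigma> x)"
  have bij: "bij_betw \<sigma> M7_ground M7_ground" using s unfolding Aut_M7_def by auto
  have inj: "inj_on \<sigma> M7_ground" using bij bij_betw_def by blast
  define P where "P = {1..7::nat} \<times> {True}"
  have PG: "P \<subseteq> M7_ground" unfolding P_def M7_ground_def by auto
  have sub: "\<sigma> ` P \<subseteq> P"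
  proof
    fix z assume "z \<in> \<sigma> ` P"
    then obtain w where w: "w \<in> P" "z = \<sigma> w" by auto
    then have "snd z" using prim_pres[OF s] PG unfolding P_def by auto
    moreover have "z \<in> M7_ground" using w PG bij bij_betwE by blast
    ultimately show "z \<in> P" unfolding P_def M7_ground_def by auto
  qed
  have "card (\<sigma> ` P) = card P" using card_image inj_on_subset[OF inj PG] by blast
  then have eq: "\<sigma> ` P = P" using sub card_subset_eq[of P] unfolding P_def by auto
  have "\<sigma> x \<in> M7_ground" using bij x bij_betwE by blast
  then have "\<sigma> x \<in> P" using sp unfolding P_def M7_ground_def by auto
  then obtain w where "w \<in> P" "\<sigma> w = \<sigma> x" using eq by force
  then have "w = x" using inj PG x by (meson inj_on_def subsetD)
  then show False using \<open>w \<in> P\<close> p unfolding P_def by auto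
qed

lemma same_perm:
  assumes s: "\<sigma> \<in> Aut_M7" and c: "c \<in> {1..7}" and "\<sigma> (c, True) = (j, True)"
  shows "\<sigma> (c, False) = (j, False)"
proof -
  have bij: "bij_betw \<sigma> M7_ground M7_ground" using s unfolding Aut_M7_def by auto
  have cG: "(c, False) \<in> M7_ground" "(c, True) \<in> M7_ground" using c unfolding M7_ground_def by auto
  have "\<sigma> (c, False) \<in> M7_ground" using bij cG bij_betwE by blast
  moreover have "\<not> snd (\<sigma> (c, False))" using unprim_pres[OF s cG(1)] by simp
  ultimately obtain k where k: "\<sigma> (c, False) = (k, False)" "k \<in> {1..7}" unfolding M7_ground_def
    by (cases "\<sigma> (c, False)") auto
  have "(j, True) \<in> M7_ground" using bij cG assms(3) bij_betwE by metis
  then have j: "j \<in> {1..7}" unfolding M7_ground_def by auto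
  have "k = j"
  proof (rule ccontr)
    assume "k \<noteq> j"
    then have "adj7 (\<sigma> (c, False)) (\<sigma> (c, True))" using k j assms(3) adj_UP by simp
    then have "adj7 (c, False) (c, True)" using adj_back[OF s cG] by simp
    then show False using nadj_cc[OF c] by simp
  qed
  then show ?thesis using k by simp
qed

theorem proposition3p6:
  fixes \<sigma> :: "nat \<times> bool \<Rightarrow> nat \<times> bool" and C :: "nat \<Rightarrow> vec3 set set"
  assumes "\<sigma> \<in> Aut_M7" and "labeled_arrangement7 C"
  shows "\<forall>j\<in>{1..7}. Lambda23_lab (act_lab \<sigma> False C) j = act_lab \<sigma> True (Lambda23_lab C) j"
proof
  fix j :: nat assume j: "j \<in> {1..7}"
  note s = assms(1)
  have bij: "bij_betw \<sigma> M7_ground M7_ground" using s unfolding Aut_M7_def by auto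
  have inj: "inj_on \<sigma> M7_ground" using bij bij_betw_def by blast
  define \<rho> where "\<rho> = inv_into M7_ground \<sigma>"
  have rho: "\<And>x. x \<in> M7_ground \<Longrightarrow> \<rho> x \<in> M7_ground \<and> \<sigma> (\<rho> x) = x"
    unfolding \<rho>_def using bij by (auto simp add: bij_betw_def f_inv_into_f inv_into_into)
  have rho2: "\<And>x. x \<in> M7_ground \<Longrightarrow> \<rho> (\<sigma> x) = x"
    unfolding \<rho>_def using inj by simp
  have jG: "(j, True) \<in> M7_ground" "(j, False) \<in> M7_ground" using j unfolding M7_ground_def by auto
  obtain c b where cb: "\<rho> (j, True) = (c, b)" by fastforce
  have cG: "(c, b) \<in> M7_ground" and sc: "\<sigma> (c, b) = (j, True)" using rho[OF jG(1)] cb by auto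
  have "b" using unprim_pres[OF s cG] sc by (metis snd_conv)
  then have sc': "\<sigma> (c, True) = (j, True)" and c: "c \<in> {1..7}" using sc cG unfolding M7_ground_def by auto
  have scF: "\<sigma> (c, False) = (j, False)" using same_perm[OF s c sc'] .
  have key: "(\<lambda>i. fst (\<rho> (i, False))) ` ({1..7} - {j}) = {1..7} - {c}"
  proof
    show "(\<lambda>i. fst (\<rho> (i, False))) ` ({1..7} - {j}) \<subseteq> {1..7} - {c}"
    proof
      fix z assume "z \<in> (\<lambda>i. fst (\<rho> (i, False))) ` ({1..7} - {j})"
      then obtain i where i: "i \<in> {1..7}" "i \<noteq> j" "z = fst (\<rho> (i, False))" by blast
      have iG: "(i, False) \<in> M7_ground" using i unfolding M7_ground_def by auto
      obtain k bb where kb: "\<rho> (i, False) = (k, bb)" by fastforce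
      have kG: "(k, bb) \<in> M7_ground" and sk: "\<sigma> (k, bb) = (i, False)" using rho[OF iG] kb by auto
      have "\<not> bb" using prim_pres[OF s kG] sk by auto
      then have kk: "k \<in> {1..7}" "\<sigma> (k, False) = (i, False)" using kG sk unfolding M7_ground_def by auto
      have "k \<noteq> c" using kk(2) scF i(2) by auto
      then show "z \<in> {1..7} - {c}" using i(3) kb kk by auto
    qed
  next
    show "{1..7} - {c} \<subseteq> (\<lambda>i. fst (\<rho> (i, False))) ` ({1..7} - {j})"
    proof
      fix k assume k: "k \<in> {1..7} - {c}"
      have kG: "(k, False) \<in> M7_ground" using k unfolding M7_ground_def by auto
      have "\<sigma> (k, False) \<in> M7_ground" using bij kG bij_betwE by blast
      moreover have "\<not> snd (\<sigma> (k, False))" using unprim_pres[OF s kG] by simp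
      ultimately obtain i where i: "\<sigma> (k, False) = (i, False)" "i \<in> {1..7}" unfolding M7_ground_def
        by (cases "\<sigma> (k, False)") auto
      have cG2: "(c, False) \<in> M7_ground" using c unfolding M7_ground_def by auto
      have "i \<noteq> j"
      proof
        assume "i = j"
        then have "\<sigma> (k, False) = \<sigma> (c, False)" using i scF by simp
        then have "(k, False) = (c, False)" using inj kG cG2 by (simp add: inj_on_eq_iff)
        then show False using k by auto
      qed
      moreover have "fst (\<rho> (i, False)) = k" using rho2[OF kG] i by simp
      ultimately show "k \<in> (\<lambda>i. fst (\<rho> (i, False))) ` ({1..7} - {j})" using i(2) by force
    qed
  qed
  have "H_arr (act_lab \<sigma> False C) j = C ` ((\<lambda>i. fst (\<rho> (i, False))) ` ({1..7} - {j}))"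
    unfolding H_arr_def act_lab_def \<rho>_def by (simp add: image_image)
  also have "\<dots> = H_arr C c" unfolding key H_arr_def ..
  finally show "Lambda23_lab (act_lab \<sigma> False C) j = act_lab \<sigma> True (Lambda23_lab C) j"
    unfolding Lambda23_lab_def act_lab_def using cb \<rho>_def by simp
qed

end
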